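(* Let $\mathcal{G}=(V,L)$ be a finite connected undirected graph with monitor set $M$ and non-monitor set $N=V\setminus M$, $\sigma=|N|$, and let the measurement paths be given by Controllable Simple-path Probing (CSP). For $v\in N$ let $\delta^*:=|C_{\mathcal{G}^*}(v,m')|$, $\delta_{\min}:=\min_{m\in M}|C_{\mathcal{G}_m}(v,m')|$ and $\pi_v:=\min(\delta_{\min},\delta^*-1)$. If $\pi_v\le\sigma-2$, then the maximum identifiability index of $v$ under CSP satisfies $\pi_v-1\le\Omega_{\mathrm{CSP}}(v)\le\pi_v$.
   Context: Failure model: a failure set is any $F\subseteq N$; a path fails iff it traverses a node of $F$. $P_F$ is the set of measurement paths traversing a node of $F$; $F_1,F_2$ distinguishable iff $P_{F_1}\ne P_{F_2}$. $S\subseteq N$ is $k$-identifiable if any two failure sets $F_1,F_2$ with $|F_1|,|F_2|\le k$ and $F_1\cap S\ne F_2\cap S$ are distinguishable (every set is trivially $0$-identifiable). $\Omega(v)$ is the maximum $k\in\{0,\dots,\sigma\}$ such that $\{v\}$ is $k$-identifiable. Under CSP, the measurement paths are all simple paths (no repeated nodes) in $\mathcal{G}$ between two distinct monitors. For $M'\subseteq M$, $\mathcal{N}(M')$ is the set of non-monitors adjacent to a monitor in $M'$. $\mathcal{G}^*$: delete all monitors from $\mathcal{G}$, add a virtual node $m'$, link $m'$ to every node of $\mathcal{N}(M)$. For $m\in M$, $\mathcal{G}_m$: delete all monitors from $\mathcal{G}$, add a virtual node $m'$, link $m'$ to every node of $\mathcal{N}(M\setminus\{m\})$. For nodes $s,t$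 of a graph $\mathcal{H}$, $C_{\mathcal{H}}(s,t)$ is a minimum-cardinality set of nodes (other than $s,t$) whose deletion destroys all $s$–$t$ paths; if $s,t$ are adjacent, $C_{\mathcal{H}}(s,t):=V(\mathcal{H})\setminus\{t\}$. *)

theory Defs
  imports Main
begin

definition ugraph :: "'a set \<Rightarrow> ('a \<Rightarrow> 'a \<Rightarrow> bool) \<Rightarrow> bool" where
  "ugraph V E \<longleftrightarrow> finite V \<and> (\<forall>x y. E x y \<longrightarrow> x \<in> V \<and> y \<in> V)
     \<and> (\<forall>x y. E x y \<longrightarrow> E y x) \<and> (\<forall>x. \<not> E x x)"

definition restr :: "('a \<Rightarrow> 'a \<Rightarrow> bool) \<Rightarrow> 'a set \<Rightarrow> 'a \<Rightarrow> 'a \<Rightarrow> bool" where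
  "restr E W = (\<lambda>x y. E x y \<and> x \<in> W \<and> y \<in> W)"

definition connected_graph :: "'a set \<Rightarrow> ('a \<Rightarrow> 'a \<Rightarrow> bool) \<Rightarrow> bool" where
  "connected_graph V E \<longleftrightarrow> (\<forall>x\<in>V. \<forall>y\<in>V. (restr E V)\<^sup>*\<^sup>* x y)"

definition simple_path :: "'a set \<Rightarrow> ('a \<Rightarrow> 'a \<Rightarrow> bool) \<Rightarrow> 'a list \<Rightarrow> bool" where
  "simple_path V E p \<longleftrightarrow> p \<noteq> [] \<and> distinct p \<and> set p \<subseteq> V \<and> successively E p"

definition csp_paths :: "'a set \<Rightarrow> ('a \<Rightarrow> 'a \<Rightarrow> bool) \<Rightarrow> 'a set \<Rightarrow> 'a list set" where
  "csp_paths V E M = {p. simple_path V E p \<and> hd p \<in> M \<and> last p \<in> M \<and> hd p \<noteq> last p}"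

definition paths_through :: "'a list set \<Rightarrow> 'a set \<Rightarrow> 'a list set" where
  "paths_through P F = {p \<in> P. set p \<inter> F \<noteq> {}}"

definition k_identifiable ::
  "'a set \<Rightarrow> ('a \<Rightarrow> 'a \<Rightarrow> bool) \<Rightarrow> 'a set \<Rightarrow> 'a set \<Rightarrow> nat \<Rightarrow> bool" where
  "k_identifiable V E M S k \<longleftrightarrow>
     (\<forall>F1 F2. F1 \<subseteq> V - M \<and> F2 \<subseteq> V - M \<and> card F1 \<le> k \<and> card F2 \<le> k
        \<and> F1 \<inter> S \<noteq> F2 \<inter> S
        \<longrightarrow> paths_through (csp_paths V E M) F1 \<noteq> paths_through (csp_paths V E M) F2)"

definition Omega_csp :: "'a set \<Rightarrow> ('a \<Rightarrow> 'a \<Rightarrow> bool) \<Rightarrow> 'a set \<Rightarrow> 'a \<Rightarrow> nat" where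
  "Omega_csp V E M v = Max {k. k \<le> card (V - M) \<and> k_identifiable V E M {v} k}"

definition nbr_mon :: "'a set \<Rightarrow> ('a \<Rightarrow> 'a \<Rightarrow> bool) \<Rightarrow> 'a set \<Rightarrow> 'a set \<Rightarrow> 'a set" where
  "nbr_mon V E M M' = {x \<in> V - M. \<exists>m\<in>M'. E x m}"

text \<open>Auxiliary graph: monitors deleted, virtual node None (= m') linked to the nodes of A.
  Original nodes x are represented by Some x.\<close>
definition aux_V :: "'a set \<Rightarrow> 'a set \<Rightarrow> 'a option set" where
  "aux_V V M = Some ` (V - M) \<union> {None}"

definition aux_E :: "'a set \<Rightarrow> ('a \<Rightarrow> 'a \<Rightarrow> bool) \<Rightarrow> 'a set \<Rightarrow> 'a set
    \<Rightarrow> 'a option \<Rightarrow> 'a option \<Rightarrow> bool" where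
  "aux_E V E M A x y = (case (x, y) of
      (Some a, Some b) \<Rightarrow> E a b \<and> a \<in> V - M \<and> b \<in> V - M
    | (None, Some b) \<Rightarrow> b \<in> A
    | (Some a, None) \<Rightarrow> a \<in> A
    | (None, None) \<Rightarrow> False)"

definition Gstar_E :: "'a set \<Rightarrow> ('a \<Rightarrow> 'a \<Rightarrow> bool) \<Rightarrow> 'a set \<Rightarrow> 'a option \<Rightarrow> 'a option \<Rightarrow> bool" where
  "Gstar_E V E M = aux_E V E M (nbr_mon V E M M)"

definition Gm_E :: "'a set \<Rightarrow> ('a \<Rightarrow> 'a \<Rightarrow> bool) \<Rightarrow> 'a set \<Rightarrow> 'a \<Rightarrow> 'a option \<Rightarrow> 'a option \<Rightarrow> bool" where
  "Gm_E V E M m = aux_E V E M (nbr_mon V E M (M - {m}))"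

definition separates :: "'b set \<Rightarrow> ('b \<Rightarrow> 'b \<Rightarrow> bool) \<Rightarrow> 'b \<Rightarrow> 'b \<Rightarrow> 'b set \<Rightarrow> bool" where
  "separates W R s t X \<longleftrightarrow> X \<subseteq> W - {s, t} \<and> \<not> (restr R (W - X))\<^sup>*\<^sup>* s t"

definition cut_card :: "'b set \<Rightarrow> ('b \<Rightarrow> 'b \<Rightarrow> bool) \<Rightarrow> 'b \<Rightarrow> 'b \<Rightarrow> nat" where
  "cut_card W R s t = (if R s t then card (W - {t}) else Min (card ` {X. separates W R s t X}))"

end

theory Submission
  imports Defs
begin

definition spath :: "('b \<Rightarrow> 'b \<Rightarrow> bool) \<Rightarrow> 'b list \<Rightarrow> 'b \<Rightarrow> 'b \<Rightarrow> bool" where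
  "spath R p x y \<longleftrightarrow> p \<noteq> [] \<and> hd p = x \<and> last p = y \<and> distinct p \<and> successively R p"

lemma ab_path_aux:
  assumes "R\<^sup>*\<^sup>* a b" "a \<in> A" "A \<inter> B = {}"
  shows "(\<exists>x y \<sigma>. x \<in> A \<and> y \<in> B \<and> spath R \<sigma> x y \<and> set \<sigma> \<inter> (A \<union> B) = {x,y})
     \<or> (b \<notin> B \<and> (\<exists>x \<sigma>. x \<in> A \<and> spath R \<sigma> x b \<and> set (tl \<sigma>) \<inter> (A \<union> B) = {}))"
  using assms(1)
proof (induction rule: rtranclp_induct)
  case base
  then show ?case using assms(2,3) by (auto simp: spath_def intro!: exI[of _ "[a]"])
next
  case (step c d)
  from step.IH show ?case
  proof
    assume "\<exists>x y \<sigma>. x \<in> A \<and> y \<in> B \<and> spath R \<sigma> x y \<and> set \<sigma> \<inter> (A \<union> B) = {x,y}"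
    then show ?thesis by blast
  next
    assume "c \<notin> B \<and> (\<exists>x \<sigma>. x \<in> A \<and> spath R \<sigma> x c \<and> set (tl \<sigma>) \<inter> (A \<union> B) = {})"
    then obtain x \<sigma> where x: "x \<in> A" and sp: "spath R \<sigma> x c" and tl: "set (tl \<sigma>) \<inter> (A \<union> B) = {}"
      by blast
    have ne: "\<sigma> \<noteq> []" and hd: "hd \<sigma> = x" and la: "last \<sigma> = c" and di: "distinct \<sigma>"
      and su: "successively R \<sigma>" using sp by (auto simp: spath_def)
    have setsig: "set \<sigma> = insert x (set (tl \<sigma>))" using ne hd by (cases \<sigma>) auto
    show ?thesis
    proof (cases "d \<in> A")
      case True
      then show ?thesis using assms(3) by (auto simp: spath_def intro!: exI[of _ "[d]"])
    next
      case dA: False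
      show ?thesis
      proof (cases "d \<in> B")
        case True
        have "d \<notin> set \<sigma>" using setsig tl True x assms(3) by auto
        hence "spath R (\<sigma> @ [d]) x d" using ne hd la di su step.hyps(2)
          by (auto simp: spath_def successively_append_iff)
        moreover have "set (\<sigma> @ [d]) \<inter> (A \<union> B) = {x, d}" using setsig tl True x by auto
        ultimately show ?thesis using x True by blast
      next
        case dB: False
        show ?thesis
        proof (cases "d \<in> set \<sigma>")
          case True
          then obtain us ws where sp2: "\<sigma> = us @ d # ws" by (meson split_list)
          have "us \<noteq> []" using hd x dA sp2 by (cases us) auto
          have "spath R (us @ [d]) x d" using sp2 ne hd di su \<open>us \<noteq> []\<close>
            by (auto simp: spath_def successively_append_iff)
          moreover have "set (tl (us @ [d])) \<subseteq> set (tl \<sigma>)" using sp2 \<open>us \<noteq> []\<close>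
            by (cases us) auto
          ultimately show ?thesis using x tl dB by blast
        next
          case False
          have "spath R (\<sigma> @ [d]) x d" using ne hd la di su step.hyps(2) False
            by (auto simp: spath_def successively_append_iff)
          moreover have "set (tl (\<sigma> @ [d])) \<inter> (A \<union> B) = {}" using tl dA dB ne by auto
          ultimately show ?thesis using x dB by blast
        qed
      qed
    qed
  qed
qed

lemma ab_path:
  assumes "R\<^sup>*\<^sup>* a b" "a \<in> A" "b \<in> B" "A \<inter> B = {}"
  shows "\<exists>x y \<sigma>. x \<in> A \<and> y \<in> B \<and> spath R \<sigma> x y \<and> set \<sigma> \<inter> (A \<union> B) = {x,y}"
proof -
  have "(\<exists>x y \<sigma>. x \<in> A \<and> y \<in> B \<and> spath R \<sigma> x y \<and> set \<sigma> \<inter> (A \<union> B) = {x,y})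
     \<or> (b \<notin> B \<and> (\<exists>x \<sigma>. x \<in> A \<and> spath R \<sigma> x b \<and> set (tl \<sigma>) \<inter> (A \<union> B) = {}))"
    by (rule ab_path_aux[OF assms(1,2,4)])
  then show ?thesis using assms(3) by (elim disjE) simp_all
qed

lemma rtranclp_spath:
  assumes "R\<^sup>*\<^sup>* a b"
  shows "\<exists>p. spath R p a b"
proof (cases "a = b")
  case True then show ?thesis by (auto simp: spath_def intro!: exI[of _ "[a]"])
next
  case False
  then show ?thesis using ab_path[OF assms, of "{a}" "{b}"] by auto
qed

lemma successively_restr_set:
  "successively (restr R W) p \<Longrightarrow> length p \<ge> 2 \<Longrightarrow> set p \<subseteq> W"
proof (induction p)
  case (Cons x xs)
  then show ?case by (cases xs; cases "tl xs") (auto simp: restr_def)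
qed auto

lemma spath_rtranclp: "spath R p a b \<Longrightarrow> R\<^sup>*\<^sup>* a b"
proof (induction p arbitrary: a)
  case Nil then show ?case by (simp add: spath_def)
next
  case (Cons x xs)
  show ?case
  proof (cases xs)
    case Nil then show ?thesis using Cons.prems by (auto simp add: spath_def)
  next
    case (Cons y ys)
    have "spath R xs y b" using Cons.prems Cons by (auto simp: spath_def)
    hence "R\<^sup>*\<^sup>* y b" using Cons.IH by blast
    moreover have "R a y" using Cons.prems Cons by (auto simp: spath_def)
    ultimately show ?thesis by (meson converse_rtranclp_into_rtranclp)
  qed
qed

definition finv where
  "finv R s t \<alpha> Q \<beta> q \<longleftrightarrow> spath R \<alpha> s q \<and> spath R Q s q \<and> spath R \<beta> q t
     \<and> set \<alpha> \<inter> set \<beta> = {q} \<and> set Q \<inter> set \<beta> = {q} \<and> set \<alpha> \<inter> set Q = {s, q}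
     \<and> 2 \<le> length \<alpha> \<and> 2 \<le> length Q"

lemma finv_sym: "finv R s t \<alpha> Q \<beta> q \<Longrightarrow> finv R s t Q \<alpha> \<beta> q"
  unfolding finv_def by blast

lemma step_core:
  assumes inv: "finv R s t \<alpha> Q \<beta> q"
    and x: "x \<in> set \<alpha>" "x \<noteq> q" and y: "y \<in> set \<beta>" "y \<noteq> q"
    and sg: "spath R \<sigma> x y" and sgi: "set \<sigma> \<inter> (set \<alpha> \<union> set Q \<union> set \<beta>) = {x, y}"
  shows "\<exists>\<alpha>' Q' \<beta>' q'. finv R s t \<alpha>' Q' \<beta>' q' \<and> length \<beta>' < length \<beta>"
proof -
  have a: "\<alpha> \<noteq> []" "hd \<alpha> = s" "last \<alpha> = q" "distinct \<alpha>" "successively R \<alpha>"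
    and qq: "Q \<noteq> []" "hd Q = s" "last Q = q" "distinct Q" "successively R Q"
    and b: "\<beta> \<noteq> []" "hd \<beta> = q" "last \<beta> = t" "distinct \<beta>" "successively R \<beta>"
    and i1: "set \<alpha> \<inter> set \<beta> = {q}" and i2: "set Q \<inter> set \<beta> = {q}" and i3: "set \<alpha> \<inter> set Q = {s, q}"
    and la: "2 \<le> length \<alpha>" and lq: "2 \<le> length Q"
    using inv by (auto simp: finv_def spath_def)
  have s: "\<sigma> \<noteq> []" "hd \<sigma> = x" "last \<sigma> = y" "distinct \<sigma>" "successively R \<sigma>"
    using sg by (auto simp: spath_def)
  have xy: "x \<noteq> y" using x y i1 by auto
  obtain us vs where us: "\<alpha> = us @ x # vs" using x by (meson split_list)
  obtain bs cs where bs: "\<beta> = bs @ y # cs" using y by (meson split_list)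
  obtain bs' where bs': "bs = q # bs'" using b(2) bs y(2) by (cases bs) auto
  have vsne: "vs \<noteq> []" using a(3) us x(2) by auto
  have qvs: "q \<in> set vs" using a(3) us vsne by auto
  have qus: "q \<notin> set us" "x \<notin> set us" using a(4) us qvs by auto
  have yna: "y \<notin> set \<alpha>" using i1 y by auto
  have ynq: "y \<notin> set Q" using i2 y by auto
  have xnb: "x \<notin> set \<beta>" using i1 x by auto
  obtain \<sigma>' where sig: "\<sigma> = x # \<sigma>'" using s(1,2) by (cases \<sigma>) auto
  have sig'ne: "\<sigma>' \<noteq> []" using sig s(3) xy by auto
  define \<alpha>' where "\<alpha>' = us @ \<sigma>"
  define Q' where "Q' = Q @ bs' @ [y]"
  define \<beta>' where "\<beta>' = y # cs"
  have setA: "set \<alpha> = set us \<union> {x} \<union> set vs" using us by auto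
  have setB: "set \<beta> = {q} \<union> set bs' \<union> {y} \<union> set cs" using bs bs' by auto
  have sigA: "set \<sigma> \<inter> set \<alpha> = {x}" using sgi yna s x by (auto simp: sig)
  have sigB: "set \<sigma> \<inter> set \<beta> = {y}" using sgi xnb s y by (auto simp: sig)
  have sigQ: "set \<sigma> \<inter> set Q \<subseteq> {s}"
  proof
    fix z assume z: "z \<in> set \<sigma> \<inter> set Q"
    then have "z \<in> {x, y}" using sgi by blast
    then have zx: "z = x" using ynq z by auto
    then have "z \<in> set \<alpha> \<inter> set Q" using x z by blast
    then have "z \<in> {s, q}" using i3 by simp
    then show "z \<in> {s}" using x(2) zx by auto
  qed
  have dB: "distinct (q # bs' @ y # cs)" using b(4) bs bs' by simp
  have spA: "spath R \<alpha>' s y"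
  proof -
    have "distinct \<alpha>'" unfolding \<alpha>'_def using a(4) us s(4) sigA qus setA by auto
    moreover have "hd \<alpha>' = s" unfolding \<alpha>'_def using a(2) us s(2) sig by (cases us) auto
    moreover have "last \<alpha>' = y" unfolding \<alpha>'_def using s by simp
    moreover have "successively R \<alpha>'" unfolding \<alpha>'_def using a(5) us s(5) sig
      by (auto simp: successively_append_iff)
    ultimately show ?thesis using s(1) by (simp add: spath_def \<alpha>'_def)
  qed
  have spQ: "spath R Q' s y"
  proof -
    have "distinct Q'" unfolding Q'_def using qq(4) dB i2 setB ynq by auto
    moreover have "hd Q' = s" unfolding Q'_def using qq by simp
    moreover have "last Q' = y" unfolding Q'_def by simp
    moreover have "successively R Q'"
    proof -
      have "successively R (q # bs' @ [y])"
        using b(5) bs bs' successively_append_iff[of R "q # bs' @ [y]" cs] by simp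
      then have "successively R (bs' @ [y])" and "R q (hd (bs' @ [y]))"
        by (auto simp: successively_Cons)
      then show ?thesis unfolding Q'_def using qq(5) qq(3)
        by (auto simp: successively_append_iff)
    qed
    ultimately show ?thesis by (simp add: spath_def Q'_def)
  qed
  have spB: "spath R \<beta>' y t"
  proof -
    have "successively R \<beta>'" using b(5) bs unfolding \<beta>'_def
      by (simp add: successively_append_iff)
    then show ?thesis using b bs unfolding \<beta>'_def spath_def by auto
  qed
  have "set \<alpha>' \<inter> set \<beta>' = {y}"
  proof -
    have "set us \<inter> set \<beta> = {}" using i1 qus setA by auto
    moreover have "set \<beta>' \<subseteq> set \<beta>" using bs \<beta>'_def by auto
    ultimately show ?thesis using sigB s unfolding \<alpha>'_def \<beta>'_def by (auto simp: sig)
  qed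
  moreover have "set Q' \<inter> set \<beta>' = {y}"
  proof -
    have "q \<notin> set \<beta>'" "set bs' \<inter> set \<beta>' = {}" "y \<notin> set bs'" using dB \<beta>'_def by auto
    moreover have "set \<beta>' \<subseteq> set \<beta>" using bs \<beta>'_def by auto
    ultimately show ?thesis using i2 unfolding Q'_def \<beta>'_def by auto
  qed
  moreover have "set \<alpha>' \<inter> set Q' = {s, y}"
  proof -
    have "s \<in> set \<alpha>'" "s \<in> set Q'" using spA spQ by (metis hd_in_set spath_def)+
    have usa: "set us \<subseteq> set \<alpha>" using us by auto
    have bsb: "set bs' \<subseteq> set \<beta>" using bs bs' by auto
    have ybs: "y \<notin> set bs'" using dB by simp
    have "set us \<inter> set Q \<subseteq> {s}" using usa i3 qus(1) by blast
    moreover have "set us \<inter> set bs' = {}"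
    proof -
      { fix z assume z: "z \<in> set us" "z \<in> set bs'"
        then have "z \<in> set \<alpha> \<inter> set \<beta>" using usa bsb by blast
        then have "z = q" using i1 by simp
        then have False using qus(1) z by simp }
      then show ?thesis by blast
    qed
    moreover have "y \<notin> set us" using usa yna by blast
    moreover have "set \<sigma> \<inter> set bs' = {}" using sigB bsb ybs by auto
    moreover have "y \<in> set \<sigma>" using s by (metis last_in_set)
    ultimately have H1: "\<And>z. z \<in> set us \<Longrightarrow> z \<in> set Q \<Longrightarrow> z = s"
      and H2: "\<And>z. z \<in> set us \<Longrightarrow> z \<in> set bs' \<Longrightarrow> False"
      and H3: "y \<notin> set us"
      and H4: "\<And>z. z \<in> set \<sigma> \<Longrightarrow> z \<in> set bs' \<Longrightarrow> False"
      and H5: "\<And>z. z \<in> set \<sigma> \<Longrightarrow> z \<in> set Q \<Longrightarrow> z = s"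
      and H6: "y \<in> set \<sigma>"
      using sigQ by blast+
    have "set \<alpha>' \<inter> set Q' \<subseteq> {s, y}"
    proof
      fix z assume "z \<in> set \<alpha>' \<inter> set Q'"
      then have zA: "z \<in> set us \<or> z \<in> set \<sigma>" and zQ: "z \<in> set Q \<or> z \<in> set bs' \<or> z = y"
        unfolding \<alpha>'_def Q'_def by auto
      show "z \<in> {s, y}" using zA zQ H1 H2 H4 H5 by blast
    qed
    moreover have "y \<in> set \<alpha>'" "y \<in> set Q'" using H6 unfolding \<alpha>'_def Q'_def by auto
    ultimately show ?thesis using \<open>s \<in> set \<alpha>'\<close> \<open>s \<in> set Q'\<close> by blast
  qed
  moreover have "2 \<le> length \<alpha>'" using sig sig'ne \<alpha>'_def by (cases \<sigma>') auto
  moreover have "2 \<le> length Q'" using lq Q'_def by simp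
  moreover have "length \<beta>' < length \<beta>" using bs bs' \<beta>'_def by simp
  ultimately have "finv R s t \<alpha>' Q' \<beta>' y \<and> length \<beta>' < length \<beta>"
    using spA spQ spB unfolding finv_def by simp
  then show ?thesis by blast
qed

lemma spath_ne: "spath R p x y \<Longrightarrow> 2 \<le> length p \<Longrightarrow> x \<noteq> y"
proof -
  assume sp: "spath R p x y" and l: "2 \<le> length p"
  obtain a b rest where p: "p = a # b # rest" using l by (cases p; cases "tl p") auto
  have "last p \<in> set (b # rest)" using p by simp
  moreover have "a \<notin> set (b # rest)" using sp p by (auto simp: spath_def)
  ultimately show ?thesis using sp p by (auto simp: spath_def)
qed

lemma fan_loop:
  assumes "finv R s t \<alpha> Q \<beta> q" "s \<noteq> t"
    and H: "\<And>z. z \<noteq> s \<Longrightarrow> z \<noteq> t \<Longrightarrow> (restr R (-{z}))\<^sup>*\<^sup>* s t"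
  shows "\<exists>\<alpha> Q. spath R \<alpha> s t \<and> spath R Q s t \<and> set \<alpha> \<inter> set Q = {s,t}"
  using assms(1)
proof (induction "length \<beta>" arbitrary: \<alpha> Q \<beta> q rule: less_induct)
  case less
  show ?case
  proof (cases "q = t")
    case True then show ?thesis using less.prems unfolding finv_def by blast
  next
    case False
    have inv: "finv R s t \<alpha> Q \<beta> q" by fact
    have a: "spath R \<alpha> s q" and qq: "spath R Q s q" and b: "spath R \<beta> q t"
      and i1: "set \<alpha> \<inter> set \<beta> = {q}" and i2: "set Q \<inter> set \<beta> = {q}" and i3: "set \<alpha> \<inter> set Q = {s, q}"
      and la: "2 \<le> length \<alpha>" using inv by (auto simp: finv_def)
    have sq: "s \<noteq> q" using spath_ne[OF a la] .
    have reach: "(restr R (-{q}))\<^sup>*\<^sup>* s t" using H sq False by auto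
    define A where "A = (set \<alpha> \<union> set Q) - {q}"
    define B where "B = set \<beta> - {q}"
    have AB: "A \<inter> B = {}" unfolding A_def B_def using i1 i2 by blast
    have sA: "s \<in> A" unfolding A_def using a sq by (auto simp: spath_def)
    have tB: "t \<in> B" unfolding B_def using b False by (auto simp: spath_def)
    obtain x y \<sigma> where x: "x \<in> A" and y: "y \<in> B" and sg: "spath (restr R (-{q})) \<sigma> x y"
      and sgi: "set \<sigma> \<inter> (A \<union> B) = {x, y}"
      using ab_path[OF reach sA tB AB] by blast
    have xy: "x \<noteq> y" using x y AB by blast
    have l2: "2 \<le> length \<sigma>"
    proof (rule ccontr)
      assume "\<not> 2 \<le> length \<sigma>"
      then have "length \<sigma> \<le> 1" by simp
      then have "hd \<sigma> = last \<sigma>" using sg by (cases \<sigma>) (auto simp: spath_def)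
      then show False using sg xy by (auto simp: spath_def)
    qed
    have qs: "q \<notin> set \<sigma>" using successively_restr_set[OF _ l2] sg by (auto simp: spath_def)
    have sgR: "spath R \<sigma> x y" using sg by (auto simp: spath_def restr_def elim: successively_mono)
    have qb: "q \<in> set \<beta>" using b by (metis hd_in_set spath_def)
    have U: "set \<alpha> \<union> set Q \<union> set \<beta> = A \<union> B \<union> {q}" unfolding A_def B_def using qb by blast
    have sgi2: "set \<sigma> \<inter> (set \<alpha> \<union> set Q \<union> set \<beta>) = {x, y}"
      unfolding U using sgi qs by blast
    have xq: "x \<noteq> q" using x A_def by blast
    have yq: "y \<in> set \<beta>" "y \<noteq> q" using y B_def by blast+
    obtain \<alpha>' Q' \<beta>' q' where new: "finv R s t \<alpha>' Q' \<beta>' q'" "length \<beta>' < length \<beta>"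
    proof (cases "x \<in> set \<alpha>")
      case True
      show ?thesis using step_core[OF inv True xq yq sgR sgi2] that by blast
    next
      case False
      then have xQ: "x \<in> set Q" using x A_def by blast
      have s2: "set \<sigma> \<inter> (set Q \<union> set \<alpha> \<union> set \<beta>) = {x, y}" using sgi2 by (simp add: Un_commute)
      show ?thesis using step_core[OF finv_sym[OF inv] xQ xq yq sgR s2] that by blast
    qed
    then show ?thesis using less.hyps[OF new(2) new(1)] by simp
  qed
qed

lemma fan2:
  assumes "s \<noteq> t" "R\<^sup>*\<^sup>* s t"
    and H: "\<And>z. z \<noteq> s \<Longrightarrow> z \<noteq> t \<Longrightarrow> (restr R (-{z}))\<^sup>*\<^sup>* s t"
  shows "\<exists>\<alpha> Q. spath R \<alpha> s t \<and> spath R Q s t \<and> set \<alpha> \<inter> set Q = {s,t}"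
proof -
  obtain P where P: "spath R P s t" using rtranclp_spath[OF assms(2)] by blast
  obtain p1 rest where P2: "P = s # p1 # rest"
    using P assms(1) by (cases P; cases "tl P") (auto simp: spath_def)
  have d: "distinct (s # p1 # rest)" and su: "successively R (s # p1 # rest)"
    and la: "last (p1 # rest) = t" using P P2 by (auto simp: spath_def)
  have sp1: "s \<noteq> p1" "s \<notin> set rest" "R s p1" "successively R (p1 # rest)" "distinct (p1 # rest)"
    using d su by auto
  have st: "set [s, p1] \<inter> set (p1 # rest) = {p1}" using sp1 by auto
  have "spath R [s, p1] s p1" using sp1 by (simp add: spath_def)
  moreover have "spath R (p1 # rest) p1 t" using sp1 la by (simp add: spath_def)
  ultimately have "finv R s t [s, p1] [s, p1] (p1 # rest) p1"
    unfolding finv_def using st by (intro conjI) (assumption | simp)+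
  from fan_loop[of R s t "[s, p1]" "[s, p1]" "p1 # rest" p1, OF this assms(1) H] show ?thesis .
qed

definition H2 :: "'a set \<Rightarrow> ('a \<Rightarrow> 'a \<Rightarrow> bool) \<Rightarrow> 'a set \<Rightarrow> 'a set \<Rightarrow> 'a option \<Rightarrow> 'a option \<Rightarrow> bool" where
  "H2 V E M F x y = (case (x, y) of
      (Some a, Some b) \<Rightarrow> E a b \<and> a \<in> V - M - F \<and> (b \<in> V - M - F \<or> b \<in> M)
    | (Some a, None) \<Rightarrow> a \<in> M
    | _ \<Rightarrow> False)"

lemma restr_stay:
  assumes "(restr R {s, t})\<^sup>*\<^sup>* s c" "\<not> R s t"
  shows "c = s"
  using assms(1)
proof (induction rule: rtranclp_induct)
  case (step c d)
  then show ?case using assms(2) by (auto simp: restr_def)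
qed simp

lemma cut_reach:
  assumes "finite W" "\<not> R s t" "X \<subseteq> W - {s, t}" "card X < cut_card W R s t"
  shows "(restr R (W - X))\<^sup>*\<^sup>* s t"
proof (rule ccontr)
  assume "\<not> ?thesis"
  then have sep: "separates W R s t X" using assms(3) by (simp add: separates_def)
  have fin: "finite (card ` {X. separates W R s t X})"
  proof -
    have "{X. separates W R s t X} \<subseteq> Pow W" by (auto simp: separates_def)
    then show ?thesis using assms(1) by (meson finite_Pow_iff finite_imageI finite_subset)
  qed
  have "cut_card W R s t \<le> card X"
    unfolding cut_card_def using assms(2) sep fin by (simp add: Min_le)
  then show False using assms(4) by simp
qed

lemma cut_obtain:
  assumes "finite W" "s \<in> W" "t \<in> W" "s \<noteq> t" "\<not> R s t"
  shows "\<exists>X. separates W R s t X \<and> card X = cut_card W R s t"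
proof -
  have sep0: "separates W R s t (W - {s, t})"
  proof -
    have e: "W - (W - {s, t}) = {s, t}" using assms(2,3) by auto
    have "\<not> (restr R {s, t})\<^sup>*\<^sup>* s t" using restr_stay[of R s t t, OF _ assms(5)] assms(4) by blast
    then show ?thesis unfolding separates_def e by simp
  qed
  have fin: "finite (card ` {X. separates W R s t X})"
  proof -
    have "{X. separates W R s t X} \<subseteq> Pow W" by (auto simp: separates_def)
    then show ?thesis using assms(1) by (meson finite_Pow_iff finite_imageI finite_subset)
  qed
  have ne: "card ` {X. separates W R s t X} \<noteq> {}" using sep0 by blast
  have "cut_card W R s t \<in> card ` {X. separates W R s t X}"
    unfolding cut_card_def using assms(5) Min_in[OF fin ne] by simp
  then show ?thesis by auto
qed

lemma trans_aux:
  assumes "(restr (aux_E V E M A) (aux_V V M - Some ` Y))\<^sup>*\<^sup>* (Some v) c"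
    and A: "A \<subseteq> {x \<in> V - M. \<exists>m\<in>M'. E x m}" and "M' \<subseteq> M" and FY: "F \<subseteq> Y"
    and z: "z \<notin> Some ` (V - M - Y)" "z \<notin> Some ` M'" "z \<noteq> None"
  shows "(restr (H2 V E M F) (-{z}))\<^sup>*\<^sup>* (Some v) None
     \<or> (\<exists>b. c = Some b \<and> (restr (H2 V E M F) (-{z}))\<^sup>*\<^sup>* (Some v) (Some b))"
  using assms(1)
proof (induction rule: rtranclp_induct)
  case base then show ?case by auto
next
  case (step c d)
  let ?R = "restr (H2 V E M F) (-{z})"
  from step.IH show ?case
  proof
    assume "?R\<^sup>*\<^sup>* (Some v) None" then show ?thesis by blast
  next
    assume "\<exists>b. c = Some b \<and> ?R\<^sup>*\<^sup>* (Some v) (Some b)"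
    then obtain b where c: "c = Some b" and rb: "?R\<^sup>*\<^sup>* (Some v) (Some b)" by blast
    have cm: "c \<in> aux_V V M - Some ` Y" "d \<in> aux_V V M - Some ` Y" and ae: "aux_E V E M A c d"
      using step.hyps(2) by (auto simp: restr_def)
    have b: "b \<in> V - M - Y" using cm(1) c by (auto simp: aux_V_def)
    show ?thesis
    proof (cases d)
      case None
      then have "b \<in> A" using ae c by (simp add: aux_E_def)
      then obtain m where m: "m \<in> M'" "E b m" using A by blast
      have "?R (Some b) (Some m)" using b m FY z assms(3)
        by (auto simp: restr_def H2_def)
      moreover have "?R (Some m) None" using m z assms(3) by (auto simp: restr_def H2_def)
      ultimately show ?thesis using rb by (meson rtranclp.rtrancl_into_rtrancl)
    next
      case (Some b')
      have b': "b' \<in> V - M - Y" using cm(2) Some by (auto simp: aux_V_def)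
      have "E b b'" using ae c Some by (simp add: aux_E_def)
      then have "?R (Some b) (Some b')" using b b' FY z by (auto simp: restr_def H2_def)
      then have "?R\<^sup>*\<^sup>* (Some v) (Some b')" using rb by (meson rtranclp.rtrancl_into_rtrancl)
      then show ?thesis using Some by blast
    qed
  qed
qed

lemma trans_G:
  assumes "(restr E V)\<^sup>*\<^sup>* v c" "v \<in> V - M"
  shows "(restr (Gstar_E V E M) (aux_V V M))\<^sup>*\<^sup>* (Some v) None
     \<or> (c \<in> V - M \<and> (restr (Gstar_E V E M) (aux_V V M))\<^sup>*\<^sup>* (Some v) (Some c))"
  using assms(1)
proof (induction rule: rtranclp_induct)
  case base then show ?case using assms(2) by auto
next
  case (step c d)
  let ?R = "restr (Gstar_E V E M) (aux_V V M)"
  from step.IH show ?case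
  proof
    assume "?R\<^sup>*\<^sup>* (Some v) None" then show ?thesis by blast
  next
    assume h: "c \<in> V - M \<and> ?R\<^sup>*\<^sup>* (Some v) (Some c)"
    have e: "E c d" "d \<in> V" using step.hyps(2) by (auto simp: restr_def)
    show ?thesis
    proof (cases "d \<in> M")
      case True
      then have "?R (Some c) None" using h e
        by (auto simp: restr_def Gstar_E_def aux_E_def aux_V_def nbr_mon_def)
      then show ?thesis using h by (meson rtranclp.rtrancl_into_rtrancl)
    next
      case False
      then have "?R (Some c) (Some d)" using h e
        by (auto simp: restr_def Gstar_E_def aux_E_def aux_V_def)
      then show ?thesis using h False e by (meson rtranclp.rtrancl_into_rtrancl Diff_iff)
    qed
  qed
qed

lemma exit_path:
  assumes "successively E (x # xs)" "set (x # xs) \<subseteq> V" "x \<notin> M" "last (x # xs) \<in> M"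
    "set (x # xs) \<inter> Y = {}" "\<forall>y\<in>set xs. y \<in> M \<longrightarrow> y \<in> M'" "M' \<subseteq> M"
  shows "(restr (aux_E V E M (nbr_mon V E M M')) (aux_V V M - Some ` Y))\<^sup>*\<^sup>* (Some x) None"
  using assms(1-6)
proof (induction xs arbitrary: x)
  case Nil then show ?case by simp
next
  case (Cons y ys)
  let ?R = "restr (aux_E V E M (nbr_mon V E M M')) (aux_V V M - Some ` Y)"
  have xy: "E x y" "x \<in> V" "y \<in> V" "x \<notin> Y" "y \<notin> Y" using Cons.prems by auto
  show ?case
  proof (cases "y \<in> M")
    case True
    then have "y \<in> M'" using Cons.prems(6) by simp
    then have "?R (Some x) None" using xy Cons.prems(3)
      by (auto simp: restr_def aux_E_def aux_V_def nbr_mon_def)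
    then show ?thesis by simp
  next
    case False
    have "?R (Some x) (Some y)" using xy Cons.prems(3) False
      by (auto simp: restr_def aux_E_def aux_V_def)
    moreover have "?R\<^sup>*\<^sup>* (Some y) None"
      using Cons.IH[of y] Cons.prems False by auto
    ultimately show ?thesis by (meson converse_rtranclp_into_rtranclp)
  qed
qed

lemma H2_list:
  "successively (H2 V E M F) l \<Longrightarrow> l \<noteq> [] \<Longrightarrow> last l = None \<Longrightarrow> hd l \<noteq> None \<Longrightarrow>
   \<exists>p. l = map Some p @ [None] \<and> p \<noteq> [] \<and> last p \<in> M \<and> successively E p
       \<and> (\<forall>a\<in>set (butlast p). a \<in> V - M - F)"
proof (induction l)
  case Nil then show ?case by simp
next
  case (Cons x xs)
  obtain a where x: "x = Some a" using Cons.prems(4) by (cases x) auto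
  obtain y ys where xs: "xs = y # ys" using Cons.prems(3) x by (cases xs) auto
  have h: "H2 V E M F x y" "successively (H2 V E M F) (y # ys)"
    using Cons.prems(1) xs by auto
  show ?case
  proof (cases y)
    case None
    have ys: "ys = []"
    proof (rule ccontr)
      assume "ys \<noteq> []"
      then obtain w ws where "ys = w # ws" by (cases ys) auto
      then show False using h(2) None by (simp add: H2_def)
    qed
    have "a \<in> M" using h(1) x None by (simp add: H2_def)
    then show ?thesis using x xs ys None by (auto intro!: exI[of _ "[a]"])
  next
    case (Some b)
    obtain p where p: "xs = map Some p @ [None]" "p \<noteq> []" "last p \<in> M" "successively E p"
      "\<forall>a\<in>set (butlast p). a \<in> V - M - F"
      using Cons.IH h(2) Cons.prems(3) xs Some x by auto
    have hp: "hd p = b" using p(1,2) xs Some by (cases p) auto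
    have "E a b" "a \<in> V - M - F" using h(1) x Some by (auto simp: H2_def)
    then have "x # xs = map Some (a # p) @ [None] \<and> a # p \<noteq> [] \<and> last (a # p) \<in> M
       \<and> successively E (a # p) \<and> (\<forall>c\<in>set (butlast (a # p)). c \<in> V - M - F)"
      using p hp x by (auto simp: successively_Cons)
    then show ?thesis by blast
  qed
qed

lemma ug_facts:
  assumes "ugraph V E"
  shows "finite V" "\<And>x y. E x y \<Longrightarrow> E y x" "\<And>x y. E x y \<Longrightarrow> x \<in> V" "\<And>x y. E x y \<Longrightarrow> y \<in> V"
    "(\<lambda>x y. E y x) = E"
  using assms unfolding ugraph_def by blast+

lemma finite_auxV: "finite V \<Longrightarrow> finite (aux_V V M)"
  by (simp add: aux_V_def)

lemma split_through:
  assumes ug: "ugraph V E" and p: "p \<in> csp_paths V E M" and v: "v \<in> set p" "v \<notin> M"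
  shows "\<exists>p1 p2. p = p1 @ v # p2 \<and> p1 \<noteq> [] \<and> p2 \<noteq> [] \<and> successively E (v # p2)
     \<and> successively E (v # rev p1) \<and> last (v # p2) \<in> M \<and> last (v # rev p1) \<in> M
     \<and> set p \<subseteq> V \<and> distinct p"
proof -
  obtain p1 p2 where sp: "p = p1 @ v # p2" using v(1) by (meson split_list)
  have pp: "p \<noteq> []" "distinct p" "set p \<subseteq> V" "successively E p" "hd p \<in> M" "last p \<in> M"
    using p by (auto simp: csp_paths_def simple_path_def)
  have p1: "p1 \<noteq> []" using pp(5) sp v(2) by (cases p1) auto
  have p2: "p2 \<noteq> []" using pp(6) sp v(2) by (cases p2) auto
  have s1: "successively E (p1 @ [v])" and s2: "successively E (v # p2)"
    using pp(4) sp by (auto simp: successively_append_iff successively_Cons)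
  have "successively (\<lambda>x y. E y x) (p1 @ [v])" using s1 ug_facts(5)[OF ug] by metis
  then have "successively E (rev (p1 @ [v]))" by (simp only: successively_rev)
  then have s3: "successively E (v # rev p1)" by simp
  have "last (v # p2) = last p" using sp p2 by simp
  moreover have "last (v # rev p1) = hd p" using sp p1 by (simp add: last_rev)
  ultimately have "p = p1 @ v # p2 \<and> p1 \<noteq> [] \<and> p2 \<noteq> [] \<and> successively E (v # p2)
     \<and> successively E (v # rev p1) \<and> last (v # p2) \<in> M \<and> last (v # rev p1) \<in> M
     \<and> set p \<subseteq> V \<and> distinct p" using sp p1 p2 s2 s3 pp by simp
  then show ?thesis by blast
qed

lemma sep_some:
  assumes "separates (aux_V V M) R (Some v) None X"
  shows "X = Some ` {y. Some y \<in> X}" "{y. Some y \<in> X} \<subseteq> V - M - {v}"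
    "card {y. Some y \<in> X} = card X"
proof -
  have Xs: "X \<subseteq> aux_V V M - {Some v, None}" using assms by (simp add: separates_def)
  show X: "X = Some ` {y. Some y \<in> X}"
  proof
    show "X \<subseteq> Some ` {y. Some y \<in> X}"
    proof
      fix x assume "x \<in> X"
      moreover then obtain y where "x = Some y" using Xs by (cases x) auto
      ultimately show "x \<in> Some ` {y. Some y \<in> X}" by auto
    qed
  qed auto
  show "{y. Some y \<in> X} \<subseteq> V - M - {v}" using Xs by (auto simp: aux_V_def)
  show "card {y. Some y \<in> X} = card X"
    by (subst (2) X) (simp add: card_image)
qed

lemma ub_A:
  assumes ug: "ugraph V E" and v: "v \<in> V - M" and m0: "m0 \<in> M"
    and sep: "separates (aux_V V M) (Gm_E V E M m0) (Some v) None X"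
  shows "\<not> k_identifiable V E M {v} (card X + 1)"
proof
  assume kid: "k_identifiable V E M {v} (card X + 1)"
  define Y where "Y = {y. Some y \<in> X}"
  have XY: "X = Some ` Y" and Ys: "Y \<subseteq> V - M - {v}" and cY: "card Y = card X"
    using sep_some[OF sep] unfolding Y_def by auto
  have finY: "finite Y" using Ys ug_facts(1)[OF ug] by (meson Diff_subset finite_subset)
  have nreach: "\<not> (restr (Gm_E V E M m0) (aux_V V M - X))\<^sup>*\<^sup>* (Some v) None"
    using sep by (simp add: separates_def)
  have eq: "paths_through (csp_paths V E M) (insert v Y) = paths_through (csp_paths V E M) Y"
  proof -
    { fix p assume p: "p \<in> csp_paths V E M" and vp: "v \<in> set p" and dis: "set p \<inter> Y = {}"
      obtain p1 p2 where s: "p = p1 @ v # p2" "p1 \<noteq> []" "p2 \<noteq> []" "successively E (v # p2)"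
        "successively E (v # rev p1)" "last (v # p2) \<in> M" "last (v # rev p1) \<in> M"
        "set p \<subseteq> V" "distinct p"
        using split_through[OF ug p vp] v by blast
      have vY: "v \<notin> Y" using Ys by auto
      have MM: "M - {m0} \<subseteq> M" by auto
      have False
      proof (cases "m0 \<in> set p2")
        case False
        have "(restr (aux_E V E M (nbr_mon V E M (M - {m0}))) (aux_V V M - Some ` Y))\<^sup>*\<^sup>* (Some v) None"
          by (rule exit_path[OF s(4) _ _ s(6) _ _ MM]) (use s dis vY v False in auto)
        then show False using nreach XY by (simp add: Gm_E_def)
      next
        case True
        then have "m0 \<notin> set p1" using s(1,9) by auto
        have "(restr (aux_E V E M (nbr_mon V E M (M - {m0}))) (aux_V V M - Some ` Y))\<^sup>*\<^sup>* (Some v) None"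
          by (rule exit_path[OF s(5) _ _ s(7) _ _ MM]) (use s dis vY v \<open>m0 \<notin> set p1\<close> in auto)
        then show False using nreach XY by (simp add: Gm_E_def)
      qed }
    then show ?thesis unfolding paths_through_def by blast
  qed
  have "v \<notin> Y" using Ys by auto
  then have "card (insert v Y) = card X + 1" using finY cY by simp
  moreover have "insert v Y \<subseteq> V - M" "Y \<subseteq> V - M" using Ys v by auto
  moreover have "insert v Y \<inter> {v} \<noteq> Y \<inter> {v}" using Ys by auto
  ultimately have c: "insert v Y \<subseteq> V - M \<and> Y \<subseteq> V - M \<and> card (insert v Y) \<le> card X + 1
      \<and> card Y \<le> card X + 1 \<and> insert v Y \<inter> {v} \<noteq> Y \<inter> {v}" using cY by simp
  have "paths_through (csp_paths V E M) (insert v Y) \<noteq> paths_through (csp_paths V E M) Y"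
    using kid c unfolding k_identifiable_def by blast
  then show False using eq by simp
qed

lemma ub_B:
  assumes ug: "ugraph V E" and v: "v \<in> V - M"
    and sep: "separates (aux_V V M) (Gstar_E V E M) (Some v) None X" and Xne: "X \<noteq> {}"
  shows "\<not> k_identifiable V E M {v} (card X)"
proof
  assume kid: "k_identifiable V E M {v} (card X)"
  define Y where "Y = {y. Some y \<in> X}"
  have XY: "X = Some ` Y" and Ys: "Y \<subseteq> V - M - {v}" and cY: "card Y = card X"
    using sep_some[OF sep] unfolding Y_def by auto
  have finY: "finite Y" using Ys ug_facts(1)[OF ug] by (meson Diff_subset finite_subset)
  obtain y0 where y0: "y0 \<in> Y" using Xne XY by blast
  have nreach: "\<not> (restr (Gstar_E V E M) (aux_V V M - X))\<^sup>*\<^sup>* (Some v) None"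
    using sep by (simp add: separates_def)
  have MM: "M \<subseteq> M" by simp
  have eq: "paths_through (csp_paths V E M) (insert v (Y - {y0})) = paths_through (csp_paths V E M) (Y - {y0})"
  proof -
    { fix p assume p: "p \<in> csp_paths V E M" and vp: "v \<in> set p" and dis: "set p \<inter> (Y - {y0}) = {}"
      obtain p1 p2 where s: "p = p1 @ v # p2" "p1 \<noteq> []" "p2 \<noteq> []" "successively E (v # p2)"
        "successively E (v # rev p1)" "last (v # p2) \<in> M" "last (v # rev p1) \<in> M"
        "set p \<subseteq> V" "distinct p"
        using split_through[OF ug p vp] v by blast
      have vY: "v \<notin> Y" using Ys by auto
      have h2: "set p2 \<inter> Y \<noteq> {}"
      proof
        assume d: "set p2 \<inter> Y = {}"
        have "(restr (aux_E V E M (nbr_mon V E M M)) (aux_V V M - Some ` Y))\<^sup>*\<^sup>* (Some v) None"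
          by (rule exit_path[OF s(4) _ _ s(6) _ _ MM]) (use s d vY v in auto)
        then show False using nreach XY by (simp add: Gstar_E_def)
      qed
      have h1: "set p1 \<inter> Y \<noteq> {}"
      proof
        assume d: "set p1 \<inter> Y = {}"
        have "(restr (aux_E V E M (nbr_mon V E M M)) (aux_V V M - Some ` Y))\<^sup>*\<^sup>* (Some v) None"
          by (rule exit_path[OF s(5) _ _ s(7) _ _ MM]) (use s d vY v in auto)
        then show False using nreach XY by (simp add: Gstar_E_def)
      qed
      obtain y1 y2 where y1: "y1 \<in> set p2" "y1 \<in> Y" and y2: "y2 \<in> set p1" "y2 \<in> Y"
        using h1 h2 by blast
      have "y1 \<noteq> y2" using s(1,9) y1 y2 by auto
      then have "y1 \<in> set p \<inter> (Y - {y0}) \<or> y2 \<in> set p \<inter> (Y - {y0})" using y1 y2 s(1) by auto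
      then have False using dis by blast }
    then show ?thesis unfolding paths_through_def by blast
  qed
  have "v \<notin> Y - {y0}" using Ys by auto
  then have "card (insert v (Y - {y0})) = Suc (card (Y - {y0}))" using finY by simp
  also have "\<dots> = card Y" using card_Suc_Diff1[OF finY y0] .
  finally have "card (insert v (Y - {y0})) = card X" using cY by simp
  moreover have "card (Y - {y0}) \<le> card X" using finY cY by (metis card_Diff1_le)
  moreover have "insert v (Y - {y0}) \<subseteq> V - M" "Y - {y0} \<subseteq> V - M" using Ys v by auto
  moreover have "insert v (Y - {y0}) \<inter> {v} \<noteq> (Y - {y0}) \<inter> {v}" using Ys by auto
  ultimately have c: "insert v (Y - {y0}) \<subseteq> V - M \<and> Y - {y0} \<subseteq> V - M
      \<and> card (insert v (Y - {y0})) \<le> card X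
      \<and> card (Y - {y0}) \<le> card X \<and> insert v (Y - {y0}) \<inter> {v} \<noteq> (Y - {y0}) \<inter> {v}" by simp
  have "paths_through (csp_paths V E M) (insert v (Y - {y0})) \<noteq> paths_through (csp_paths V E M) (Y - {y0})"
    using kid c unfolding k_identifiable_def by blast
  then show False using eq by simp
qed

lemma two_steps:
  assumes "H2 V E M F (Some v) (Some m)" "H2 V E M F (Some m) None"
    "z \<noteq> Some v" "z \<noteq> Some m" "z \<noteq> None"
  shows "(restr (H2 V E M F) (-{z}))\<^sup>*\<^sup>* (Some v) None"
proof -
  have "restr (H2 V E M F) (-{z}) (Some v) (Some m)" "restr (H2 V E M F) (-{z}) (Some m) None"
    using assms by (auto simp: restr_def)
  then show ?thesis by (meson converse_rtranclp_into_rtranclp r_into_rtranclp)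
qed

lemma key_H:
  assumes ug: "ugraph V E" and v: "v \<in> V - M"
    and F: "F \<subseteq> V - M" "v \<notin> F"
    and cs: "card F + 1 < cut_card (aux_V V M) (Gstar_E V E M) (Some v) None"
    and cm: "\<And>m. m \<in> M \<Longrightarrow> card F < cut_card (aux_V V M) (Gm_E V E M m) (Some v) None"
    and z: "z \<noteq> Some v" "z \<noteq> None"
  shows "(restr (H2 V E M F) (-{z}))\<^sup>*\<^sup>* (Some v) None"
proof -
  have finW: "finite (aux_V V M)" using finite_auxV ug_facts(1)[OF ug] by blast
  have finF: "finite F" using F(1) ug_facts(1)[OF ug] by (meson Diff_subset finite_subset)
  obtain w where zw: "z = Some w" using z(2) by (cases z) auto
  have vF: "v \<in> V - M - F" using v F by auto
  show ?thesis
  proof (cases "w \<in> M")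
    case wM: True
    show ?thesis
    proof (cases "Gm_E V E M w (Some v) None")
      case True
      then obtain m' where m': "m' \<in> M - {w}" "E v m'"
        by (auto simp: Gm_E_def aux_E_def nbr_mon_def)
      show ?thesis
        by (rule two_steps[of V E M F v m']) (use m' vF z zw in \<open>auto simp: H2_def\<close>)
    next
      case False
      have X: "Some ` F \<subseteq> aux_V V M - {Some v, None}" using F by (auto simp: aux_V_def)
      have "card (Some ` F) < cut_card (aux_V V M) (Gm_E V E M w) (Some v) None"
        using cm[OF wM] by (simp add: card_image)
      from cut_reach[OF finW False X this]
      have r: "(restr (aux_E V E M (nbr_mon V E M (M - {w}))) (aux_V V M - Some ` F))\<^sup>*\<^sup>* (Some v) None"
        by (simp add: Gm_E_def)
      have A: "nbr_mon V E M (M - {w}) \<subseteq> {x \<in> V - M. \<exists>m\<in>M - {w}. E x m}"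
        by (auto simp: nbr_mon_def)
      show ?thesis using trans_aux[OF r A _ order_refl, of z] zw wM by auto
    qed
  next
    case wM: False
    show ?thesis
    proof (cases "Gstar_E V E M (Some v) None")
      case True
      then obtain m' where m': "m' \<in> M" "E v m'"
        by (auto simp: Gstar_E_def aux_E_def nbr_mon_def)
      show ?thesis
        by (rule two_steps[of V E M F v m']) (use m' vF z zw wM in \<open>auto simp: H2_def\<close>)
    next
      case False
      define Y where "Y = F \<union> ({w} \<inter> (V - M))"
      have wv: "w \<noteq> v" using z zw by auto
      have X: "Some ` Y \<subseteq> aux_V V M - {Some v, None}" using F wv by (auto simp: aux_V_def Y_def)
      have c1: "card ({w} \<inter> (V - M)) \<le> card {w}" by (rule card_mono) auto
      have "card Y \<le> card F + card ({w} \<inter> (V - M))" unfolding Y_def by (rule card_Un_le)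
      then have "card Y \<le> card F + 1" using c1 by simp
      then have "card (Some ` Y) < cut_card (aux_V V M) (Gstar_E V E M) (Some v) None"
        using cs by (simp add: card_image)
      from cut_reach[OF finW False X this]
      have r: "(restr (aux_E V E M (nbr_mon V E M M)) (aux_V V M - Some ` Y))\<^sup>*\<^sup>* (Some v) None"
        by (simp add: Gstar_E_def)
      have A: "nbr_mon V E M M \<subseteq> {x \<in> V - M. \<exists>m\<in>M. E x m}"
        by (auto simp: nbr_mon_def)
      have FY: "F \<subseteq> Y" by (simp add: Y_def)
      have "z \<notin> Some ` (V - M - Y)" using zw by (auto simp: Y_def)
      then show ?thesis using trans_aux[OF r A order_refl FY, of z] zw wM by auto
    qed
  qed
qed

lemma path_sets:
  assumes "p \<noteq> []" "last p \<in> M" "\<forall>a\<in>set (butlast p). a \<in> V - M - F" "M \<subseteq> V" "F \<inter> M = {}"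
  shows "set p \<subseteq> V" "set p \<inter> F = {}"
proof -
  have "set p = set (butlast p) \<union> {last p}"
    using append_butlast_last_id[OF assms(1)] by (metis set_append empty_set list.simps(15) Un_empty_right)
  then show "set p \<subseteq> V" "set p \<inter> F = {}" using assms by auto
qed

lemma combine:
  assumes ug: "ugraph V E" and vM: "v \<notin> M" and FM: "F \<inter> M = {}" and MV: "M \<subseteq> V"
    and p: "p \<noteq> []" "hd p = v" "last p \<in> M" "successively E p" "distinct p"
      "\<forall>a\<in>set (butlast p). a \<in> V - M - F"
    and q: "q \<noteq> []" "hd q = v" "last q \<in> M" "successively E q" "distinct q"
      "\<forall>a\<in>set (butlast q). a \<in> V - M - F"
    and pq: "set p \<inter> set q \<subseteq> {v}"
  shows "\<exists>P \<in> csp_paths V E M. v \<in> set P \<and> set P \<inter> F = {}"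
proof -
  obtain q' where q': "q = v # q'" using q(1,2) by (cases q) auto
  have q'ne: "q' \<noteq> []" using q(3) q' vM by auto
  have ps: "set p \<subseteq> V" "set p \<inter> F = {}" using path_sets[OF p(1) p(3) p(6) MV FM] by auto
  have qs: "set q \<subseteq> V" "set q \<inter> F = {}" using path_sets[OF q(1) q(3) q(6) MV FM] by auto
  define P where "P = rev p @ q'"
  have vq': "v \<notin> set q'" using q(5) q' by simp
  have disj: "set p \<inter> set q' = {}" using pq vq' q' by auto
  have dP: "distinct P" unfolding P_def using p(5) q(5) q' disj by auto
  have sp: "successively E (rev p)"
  proof -
    have "successively (\<lambda>x y. E y x) p" using p(4) ug_facts(5)[OF ug] by metis
    then show ?thesis by (simp only: successively_rev)
  qed
  have sq': "successively E q'" and e: "E v (hd q')"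
    using q(4) q' q'ne by (auto simp: successively_Cons)
  have lrp: "last (rev p) = v" using p(1,2) by (simp add: last_rev)
  have sP: "successively E P" unfolding P_def using sp sq' e lrp p(1) q'ne
    by (simp add: successively_append_iff)
  have hP: "hd P = last p" unfolding P_def using p(1) by (simp add: hd_rev)
  have lP: "last P = last q" unfolding P_def using q' q'ne by simp
  have ne: "last p \<noteq> last q"
  proof
    assume "last p = last q"
    then have "last p \<in> set p \<inter> set q" using p(1) q(1) by (metis IntI last_in_set)
    then have "last p = v" using pq by auto
    then show False using p(3) vM by simp
  qed
  have "P \<in> csp_paths V E M"
    unfolding csp_paths_def simple_path_def using dP sP hP lP ne p(1,3) q(3) ps qs q'
    by (auto simp: P_def)
  moreover have "v \<in> set P" using p(1,2) unfolding P_def by (metis hd_in_set set_rev Un_iff set_append)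
  moreover have "set P \<inter> F = {}" using ps qs q' unfolding P_def by auto
  ultimately show ?thesis by blast
qed

lemma key:
  assumes ug: "ugraph V E" and v: "v \<in> V - M" and MV: "M \<subseteq> V" and Mne: "M \<noteq> {}"
    and F: "F \<subseteq> V - M" "v \<notin> F"
    and cs: "card F + 1 < cut_card (aux_V V M) (Gstar_E V E M) (Some v) None"
    and cm: "\<And>m. m \<in> M \<Longrightarrow> card F < cut_card (aux_V V M) (Gm_E V E M m) (Some v) None"
  shows "\<exists>P \<in> csp_paths V E M. v \<in> set P \<and> set P \<inter> F = {}"
proof -
  let ?R = "H2 V E M F"
  have H: "\<And>z. z \<noteq> Some v \<Longrightarrow> z \<noteq> None \<Longrightarrow> (restr ?R (-{z}))\<^sup>*\<^sup>* (Some v) None"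
    using key_H[OF ug v F cs cm] by blast
  obtain m0 where m0: "m0 \<in> M" using Mne by blast
  have "Some m0 \<noteq> Some v" using m0 v by auto
  then have "(restr ?R (-{Some m0}))\<^sup>*\<^sup>* (Some v) None" using H by simp
  moreover have "restr ?R (-{Some m0}) \<le> ?R" by (auto simp: restr_def)
  ultimately have R0: "?R\<^sup>*\<^sup>* (Some v) None" by (metis rtranclp_mono predicate2D)
  obtain \<alpha> Q where fan: "spath ?R \<alpha> (Some v) None" "spath ?R Q (Some v) None"
    "set \<alpha> \<inter> set Q = {Some v, None}"
    using fan2[of "Some v" None ?R, OF _ R0 H] by blast
  have a: "successively ?R \<alpha>" "\<alpha> \<noteq> []" "last \<alpha> = None" "hd \<alpha> \<noteq> None" "distinct \<alpha>" "hd \<alpha> = Some v"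
    using fan(1) by (auto simp: spath_def)
  have b: "successively ?R Q" "Q \<noteq> []" "last Q = None" "hd Q \<noteq> None" "distinct Q" "hd Q = Some v"
    using fan(2) by (auto simp: spath_def)
  obtain p where p: "\<alpha> = map Some p @ [None]" "p \<noteq> []" "last p \<in> M" "successively E p"
    "\<forall>a\<in>set (butlast p). a \<in> V - M - F"
    using H2_list[OF a(1-4)] by blast
  obtain q where q: "Q = map Some q @ [None]" "q \<noteq> []" "last q \<in> M" "successively E q"
    "\<forall>a\<in>set (butlast q). a \<in> V - M - F"
    using H2_list[OF b(1-4)] by blast
  have hp: "hd p = v" using a(6) p(1,2) by (cases p) auto
  have hq: "hd q = v" using b(6) q(1,2) by (cases q) auto
  have dp: "distinct p" using a(5) p(1) by (simp add: distinct_map)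
  have dq: "distinct q" using b(5) q(1) by (simp add: distinct_map)
  have pq: "set p \<inter> set q \<subseteq> {v}"
  proof
    fix x assume "x \<in> set p \<inter> set q"
    then have "Some x \<in> set \<alpha> \<inter> set Q" using p(1) q(1) by auto
    then show "x \<in> {v}" using fan(3) by auto
  qed
  have FM: "F \<inter> M = {}" using F by auto
  show ?thesis
    by (rule combine[OF ug _ FM MV p(2) hp p(3,4) dp p(5) q(2) hq q(3,4) dq q(5) pq]) (use v in auto)
qed

lemma kid_mono: "k_identifiable V E M S k \<Longrightarrow> j \<le> k \<Longrightarrow> k_identifiable V E M S j"
  unfolding k_identifiable_def by (meson order_trans)

lemma kid0: "finite V \<Longrightarrow> k_identifiable V E M S 0"
  unfolding k_identifiable_def
  by (metis card_0_eq finite_Diff finite_subset le_zero_eq)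

theorem theorem5:
  fixes V :: "'a set" and E :: "'a \<Rightarrow> 'a \<Rightarrow> bool" and M :: "'a set" and v :: 'a
  assumes "ugraph V E" and "connected_graph V E"
    and "M \<subseteq> V" and "M \<noteq> {}"
    and "v \<in> V - M"
  defines "\<sigma> \<equiv> card (V - M)"
    and "\<delta>star \<equiv> cut_card (aux_V V M) (Gstar_E V E M) (Some v) None"
    and "\<delta>min \<equiv> Min ((\<lambda>m. cut_card (aux_V V M) (Gm_E V E M m) (Some v) None) ` M)"
  defines "\<pi> \<equiv> min (int \<delta>min) (int \<delta>star - 1)"
  assumes "\<pi> \<le> int \<sigma> - 2"
  shows "\<pi> - 1 \<le> int (Omega_csp V E M v) \<and> int (Omega_csp V E M v) \<le> \<pi>"
proof -
  note ug = assms(1) and conn = assms(2) and MV = assms(3) and Mne = assms(4) and v = assms(5)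
  note piS = assms(10)
  note sdef = \<open>\<sigma> \<equiv> card (V - M)\<close> and dsdef = \<open>\<delta>star \<equiv> cut_card (aux_V V M) (Gstar_E V E M) (Some v) None\<close>
    and dmdef = \<open>\<delta>min \<equiv> Min ((\<lambda>m. cut_card (aux_V V M) (Gm_E V E M m) (Some v) None) ` M)\<close>
    and pidef = \<open>\<pi> \<equiv> min (int \<delta>min) (int \<delta>star - 1)\<close>
  have finV: "finite V" using ug_facts(1)[OF ug] .
  have finW: "finite (aux_V V M)" using finite_auxV[OF finV] .
  have sW: "Some v \<in> aux_V V M" "None \<in> aux_V V M" "Some v \<noteq> None" using v by (auto simp: aux_V_def)
  have cardW: "card (aux_V V M - {None}) = \<sigma>"
  proof -
    have "aux_V V M - {None} = Some ` (V - M)" by (auto simp: aux_V_def)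
    then show ?thesis unfolding sdef by (simp add: card_image)
  qed
  have sig1: "1 \<le> \<sigma>" unfolding sdef using v finV
    by (metis One_nat_def Suc_leI card_gt_0_iff empty_iff finite_Diff)
  have ds1: "1 \<le> \<delta>star"
  proof (cases "Gstar_E V E M (Some v) None")
    case True
    then have "\<delta>star = \<sigma>" unfolding dsdef cut_card_def using cardW by simp
    then show ?thesis using sig1 by simp
  next
    case False
    obtain X where X: "separates (aux_V V M) (Gstar_E V E M) (Some v) None X" "card X = \<delta>star"
      using cut_obtain[where R="Gstar_E V E M", OF finW sW(1) sW(2) sW(3) False] unfolding dsdef by blast
    show ?thesis
    proof (rule ccontr)
      assume "\<not> 1 \<le> \<delta>star"
      then have "card X = 0" using X(2) by simp
      moreover have "finite X" using X(1) finW by (meson finite_subset separates_def Diff_subset subset_trans)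
      ultimately have "X = {}" by simp
      then have nr: "\<not> (restr (Gstar_E V E M) (aux_V V M))\<^sup>*\<^sup>* (Some v) None"
        using X(1) by (simp add: separates_def)
      obtain m0 where m0: "m0 \<in> M" using Mne by blast
      have "(restr E V)\<^sup>*\<^sup>* v m0" using conn v m0 MV by (auto simp: connected_graph_def)
      from trans_G[OF this v] show False using nr m0 by auto
    qed
  qed
  have finI: "finite ((\<lambda>m. cut_card (aux_V V M) (Gm_E V E M m) (Some v) None) ` M)"
    using MV finV by (meson finite_imageI finite_subset)
  have dmle: "\<And>m. m \<in> M \<Longrightarrow> \<delta>min \<le> cut_card (aux_V V M) (Gm_E V E M m) (Some v) None"
    unfolding dmdef using finI by simp
  obtain m0 where m0: "m0 \<in> M" "\<delta>min = cut_card (aux_V V M) (Gm_E V E M m0) (Some v) None"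
    using Min_in[OF finI] Mne unfolding dmdef by auto
  define S where "S = {k. k \<le> \<sigma> \<and> k_identifiable V E M {v} k}"
  have Om: "Omega_csp V E M v = Max S" unfolding S_def Omega_csp_def sdef by simp
  have finS: "finite S" unfolding S_def by (rule finite_subset[of _ "{..\<sigma>}"]) auto
  have S0: "0 \<in> S" unfolding S_def using kid0[OF finV] by simp
  have pi0: "0 \<le> \<pi>" unfolding pidef using ds1 by simp
  have lower: "\<pi> - 1 \<le> int (Max S)"
  proof (cases "\<pi> \<le> 1")
    case True then show ?thesis by simp
  next
    case False
    define k where "k = nat (\<pi> - 1)"
    have kpi: "int k + 1 = \<pi>" unfolding k_def using False by simp
    have "k \<le> \<sigma>" using kpi piS by simp
    moreover have "k_identifiable V E M {v} k"
      unfolding k_identifiable_def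
    proof (intro allI impI)
      fix F1 F2
      assume h: "F1 \<subseteq> V - M \<and> F2 \<subseteq> V - M \<and> card F1 \<le> k \<and> card F2 \<le> k \<and> F1 \<inter> {v} \<noteq> F2 \<inter> {v}"
      have useKey: "\<And>F G. F \<subseteq> V - M \<Longrightarrow> card F \<le> k \<Longrightarrow> v \<notin> F \<Longrightarrow> v \<in> G \<Longrightarrow>
          paths_through (csp_paths V E M) G \<noteq> paths_through (csp_paths V E M) F"
      proof -
        fix F G assume F: "F \<subseteq> V - M" "card F \<le> k" "v \<notin> F" "v \<in> G"
        have cs: "card F + 1 < \<delta>star" using F(2) kpi unfolding pidef by simp
        have cm: "\<And>m. m \<in> M \<Longrightarrow> card F < cut_card (aux_V V M) (Gm_E V E M m) (Some v) None"
        proof -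
          fix m assume "m \<in> M"
          have "int (card F) < int \<delta>min" using F(2) kpi unfolding pidef by simp
          then show "card F < cut_card (aux_V V M) (Gm_E V E M m) (Some v) None"
            using dmle[OF \<open>m \<in> M\<close>] by simp
        qed
        obtain P where P: "P \<in> csp_paths V E M" "v \<in> set P" "set P \<inter> F = {}"
          using key[OF ug v MV Mne F(1) F(3) cs[unfolded dsdef] cm] by blast
        have "P \<in> paths_through (csp_paths V E M) G" using P F(4) by (auto simp: paths_through_def)
        moreover have "P \<notin> paths_through (csp_paths V E M) F" using P by (auto simp: paths_through_def)
        ultimately show "paths_through (csp_paths V E M) G \<noteq> paths_through (csp_paths V E M) F" by blast
      qed
      show "paths_through (csp_paths V E M) F1 \<noteq> paths_through (csp_paths V E M) F2"
      proof (cases "v \<in> F1")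
        case True
        then have "v \<notin> F2" using h by blast
        then show ?thesis using useKey[of F2 F1] h True by blast
      next
        case False
        then have "v \<in> F2" using h by blast
        then show ?thesis using useKey[of F1 F2] h False by metis
      qed
    qed
    ultimately have "k \<in> S" unfolding S_def by simp
    then have "k \<le> Max S" using finS by simp
    then show ?thesis using kpi by simp
  qed
  have notk: "\<not> k_identifiable V E M {v} (nat \<pi> + 1)"
  proof (cases "int \<delta>min \<le> int \<delta>star - 1")
    case True
    then have pim: "\<pi> = int \<delta>min" unfolding pidef by simp
    show ?thesis
    proof (cases "Gm_E V E M m0 (Some v) None")
      case True
      then have "\<delta>min = \<sigma>" using m0(2) cardW unfolding cut_card_def by simp
      then show ?thesis using pim piS by simp
    next
      case False
      obtain X where X: "separates (aux_V V M) (Gm_E V E M m0) (Some v) None X" "card X = \<delta>min"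
        using cut_obtain[where R="Gm_E V E M m0", OF finW sW(1) sW(2) sW(3) False] m0(2) by auto
      have "nat \<pi> + 1 = card X + 1" using pim X(2) by simp
      then show ?thesis using ub_A[OF ug v m0(1) X(1)] by simp
    qed
  next
    case False
    then have pis: "\<pi> = int \<delta>star - 1" unfolding pidef by simp
    show ?thesis
    proof (cases "Gstar_E V E M (Some v) None")
      case True
      then have "\<delta>star = \<sigma>" unfolding dsdef cut_card_def using cardW by simp
      then show ?thesis using pis piS by simp
    next
      case False
      obtain X where X: "separates (aux_V V M) (Gstar_E V E M) (Some v) None X" "card X = \<delta>star"
        using cut_obtain[where R="Gstar_E V E M", OF finW sW(1) sW(2) sW(3) False] unfolding dsdef by blast
      have Xne: "X \<noteq> {}" using X(2) ds1 by auto
      have "nat \<pi> + 1 = card X" using pis X(2) ds1 by simp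
      then show ?thesis using ub_B[OF ug v X(1) Xne] by simp
    qed
  qed
  have upper: "int (Max S) \<le> \<pi>"
  proof (rule ccontr)
    assume "\<not> int (Max S) \<le> \<pi>"
    then have le: "nat \<pi> + 1 \<le> Max S" using pi0 by simp
    have "Max S \<in> S" using Max_in[OF finS] S0 by blast
    then have "k_identifiable V E M {v} (Max S)" unfolding S_def by simp
    then show False using kid_mono[OF _ le] notk by blast
  qed
  show ?thesis using lower upper Om by simp
qed

end
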